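(* If $G$ is a diamond-necklace $N_k$ for some $k\ge 2$, then $m(G,2) = u(G)+1$ (that is, $m(N_k,2)=k+1$).
   Context: A diamond is a graph isomorphic to $K_4$ minus one edge. Diamond-necklace: for $k\ge 2$, take $k$ disjoint diamonds $D_1,\dots,D_k$ with $V(D_i)=\{a_i,b_i,c_i,d_i\}$ where $a_ib_i$ is the missing edge, and add the edges $a_ib_{i+1}$ for $i\in\{1,\dots,k-1\}$ and the edge $a_kb_1$; the result is $N_k$. For a connected claw-free cubic graph $G\ne K_4$, $V(G)$ is uniquely partitioned into sets inducing triangles or diamonds, called units; $u(G)$ is their number (for $N_k$, the units are the $k$ diamonds $D_i$). $r$-percolation: starting from a set $S$ of infected vertices, repeatedly infect any uninfected vertex having at least $r$ infected neighbors. $S$ is an $r$-percolating set if eventually all vertices are infected; $m(G,r)$ is the minimum cardinality of an $r$-percolating set of $G$. *)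

theory Defs
  imports Main
begin

text \<open>A (simple) graph is given by a vertex set V and a symmetric irreflexive
adjacency relation E.\<close>

definition perc_step :: "'a set \<Rightarrow> ('a \<Rightarrow> 'a \<Rightarrow> bool) \<Rightarrow> nat \<Rightarrow> 'a set \<Rightarrow> 'a set" where
  "perc_step V E r S = S \<union> {x \<in> V. card {y \<in> V. E x y \<and> y \<in> S} \<ge> r}"

definition percolating :: "'a set \<Rightarrow> ('a \<Rightarrow> 'a \<Rightarrow> bool) \<Rightarrow> nat \<Rightarrow> 'a set \<Rightarrow> bool" where
  "percolating V E r S \<longleftrightarrow> S \<subseteq> V \<and> (\<exists>n. (perc_step V E r ^^ n) S = V)"

definition m_perc :: "'a set \<Rightarrow> ('a \<Rightarrow> 'a \<Rightarrow> bool) \<Rightarrow> nat \<Rightarrow> nat" where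
  "m_perc V E r = (LEAST n. \<exists>S. percolating V E r S \<and> card S = n)"

text \<open>Vertex (i,p) with i < k, p < 4 is a_i, b_i, c_i, d_i
for p = 0,1,2,3 (diamonds indexed 0..k-1). Inside a diamond all pairs are adjacent
except a_i b_i; in addition a_i is adjacent to b_(i+1 mod k).\<close>
definition necklace_V :: "nat \<Rightarrow> (nat \<times> nat) set" where
  "necklace_V k = {..<k} \<times> {..<4}"

definition necklace_E :: "nat \<Rightarrow> nat \<times> nat \<Rightarrow> nat \<times> nat \<Rightarrow> bool" where
  "necklace_E k u v = (case u of (i, p) \<Rightarrow> case v of (j, q) \<Rightarrow>
     i < k \<and> j < k \<and> p < 4 \<and> q < 4 \<and>
     ((i = j \<and> p \<noteq> q \<and> {p, q} \<noteq> {0, 1}) \<or>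
      (p = 0 \<and> q = 1 \<and> j = Suc i mod k) \<or>
      (p = 1 \<and> q = 0 \<and> i = Suc j mod k)))"

end

theory Submission
  imports Defs
begin

lemma E_simp: "necklace_E k (i,p) (j,q) = (i<k \<and> j<k \<and> p<4 \<and> q<4 \<and>
   ((i=j \<and> p\<noteq>q \<and> {p,q}\<noteq>{0,1}) \<or> (p=0 \<and> q=1 \<and> j = Suc i mod k) \<or> (p=1 \<and> q=0 \<and> i = Suc j mod k)))"
  by (simp add: necklace_E_def)

lemma finite_V: "finite (necklace_V k)" by (simp add: necklace_V_def)

lemma step_mono: "A \<subseteq> perc_step V E r A" by (auto simp: perc_step_def)

lemma iter_mono: "n \<le> m \<Longrightarrow> (perc_step V E r ^^ n) A \<subseteq> (perc_step V E r ^^ m) A"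
proof (induction m)
  case 0 then show ?case by simp
next
  case (Suc m)
  show ?case
  proof (cases "n = Suc m")
    case True then show ?thesis by simp
  next
    case False
    then have "n \<le> m" using Suc.prems by simp
    then have "(perc_step V E r ^^ n) A \<subseteq> (perc_step V E r ^^ m) A" using Suc.IH by simp
    also have "\<dots> \<subseteq> (perc_step V E r ^^ Suc m) A" using step_mono by simp
    finally show ?thesis .
  qed
qed

lemma infect2:
  assumes "finite V" "x\<in>V" "y\<in>V" "z\<in>V" "y\<noteq>z" "E x y" "E x z" "y\<in>A" "z\<in>A"
  shows "x \<in> perc_step V E 2 A"
proof -
  have "{y,z} \<subseteq> {w\<in>V. E x w \<and> w\<in>A}" using assms by auto
  then have "card {y,z} \<le> card {w\<in>V. E x w \<and> w\<in>A}"
    by (rule card_mono[rotated]) (use assms in auto)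
  then have "2 \<le> card {w\<in>V. E x w \<and> w\<in>A}" using assms by simp
  then show ?thesis using assms unfolding perc_step_def by auto
qed

lemma closed_never:
  assumes "finite V" "C \<inter> S = {}"
    "\<And>x y z. x\<in>C \<Longrightarrow> y\<in>V \<Longrightarrow> z\<in>V \<Longrightarrow> E x y \<Longrightarrow> E x z \<Longrightarrow> y\<notin>C \<Longrightarrow> z\<notin>C \<Longrightarrow> y=z"
  shows "(perc_step V E 2 ^^ n) S \<inter> C = {}"
proof (induction n)
  case 0 then show ?case using assms(2) by auto
next
  case (Suc n)
  let ?A = "(perc_step V E 2 ^^ n) S"
  have "x \<notin> perc_step V E 2 ?A" if "x \<in> C" for x
  proof
    assume "x \<in> perc_step V E 2 ?A"
    moreover have "x \<notin> ?A" using Suc.IH that by auto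
    ultimately have c2: "2 \<le> card {w\<in>V. E x w \<and> w\<in>?A}" unfolding perc_step_def by auto
    have "card {w\<in>V. E x w \<and> w\<in>?A} \<le> Suc 0"
      using Suc.IH assms(3)[OF that] assms(1)
      by (subst card_le_Suc0_iff_eq) auto
    then show False using c2 by simp
  qed
  then show ?case by auto
qed

lemma suc_mod: "j < k \<Longrightarrow> Suc j mod k = (if Suc j = k then 0 else Suc j)"
  by auto

lemma suc_mod_inj: "j < k \<Longrightarrow> j' < k \<Longrightarrow> Suc j mod k = Suc j' mod k \<Longrightarrow> j = j'"
  by (simp add: suc_mod split: if_splits)

lemma clos_A:
  assumes "x \<in> {i} \<times> {..<4::nat}" "necklace_E k x y" "necklace_E k x z"
    "y \<notin> {i} \<times> {..<4::nat}" "z \<notin> {i} \<times> {..<4::nat}"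
  shows "y = z"
proof -
  obtain p where x: "x = (i,p)" using assms(1) by auto
  obtain j q where y: "y = (j,q)" by (cases y)
  obtain j' q' where z: "z = (j',q')" by (cases z)
  have ey: "j < k" "q < 4" "(p=0 \<and> q=1 \<and> j = Suc i mod k) \<or> (p=1 \<and> q=0 \<and> i = Suc j mod k)"
    using assms(2,4) x y by (auto simp: E_simp)
  have ez: "j' < k" "q' < 4" "(p=0 \<and> q'=1 \<and> j' = Suc i mod k) \<or> (p=1 \<and> q'=0 \<and> i = Suc j' mod k)"
    using assms(3,5) x z by (auto simp: E_simp)
  show ?thesis using ey ez suc_mod_inj[of j k j'] y z by auto
qed

lemma clos_B_aux:
  assumes "p = a \<or> p = 2 \<or> p = (3::nat)" "a = 0 \<or> a = 1" "q < 4"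
    "(i=j \<and> p\<noteq>q \<and> {p,q}\<noteq>{0,1}) \<or> (p=0 \<and> q=1 \<and> j = Suc i mod k) \<or> (p=1 \<and> q=0 \<and> i = Suc j mod k)"
    "\<not> (j = i \<and> (q = a \<or> q = 2 \<or> q = 3))"
  shows "(p \<noteq> a \<and> j = i \<and> q = 1 - a) \<or> (p = a \<and> a = 0 \<and> q = 1 \<and> j = Suc i mod k) \<or>
         (p = a \<and> a = 1 \<and> q = 0 \<and> i = Suc j mod k)"
proof -
  have q: "q = 0 \<or> q = 1 \<or> q = 2 \<or> q = 3" using assms(3) by auto
  show ?thesis
  proof (cases "i = j \<and> p\<noteq>q \<and> {p,q}\<noteq>{0,1}")
    case True
    then have ij: "i = j" and pq: "p \<noteq> q" and d: "{p,q}\<noteq>{0,1}" by auto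
    have "q \<noteq> a" "q \<noteq> 2" "q \<noteq> 3" using assms(5) ij by auto
    then show ?thesis using q assms(1,2) pq d ij by (cases "a = 0") auto
  next
    case False
    then have "(p=0 \<and> q=1 \<and> j = Suc i mod k) \<or> (p=1 \<and> q=0 \<and> i = Suc j mod k)" using assms(4) by blast
    then show ?thesis using assms(1,2) by auto
  qed
qed

lemma clos_B:
  assumes "x \<in> {(i,a),(i,2),(i,3::nat)}" "a = 0 \<or> a = 1" "necklace_E k x y" "necklace_E k x z"
    "y \<notin> {(i,a),(i,2),(i,3::nat)}" "z \<notin> {(i,a),(i,2),(i,3::nat)}"
  shows "y = z"
proof -
  obtain p where x: "x = (i,p)" "p = a \<or> p = 2 \<or> p = 3" using assms(1) by auto
  obtain j q where y: "y = (j,q)" by (cases y)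
  obtain j' q' where z: "z = (j',q')" by (cases z)
  have ey: "j < k" "i < k" "q < 4" "(i=j \<and> p\<noteq>q \<and> {p,q}\<noteq>{0,1}) \<or> (p=0 \<and> q=1 \<and> j = Suc i mod k) \<or> (p=1 \<and> q=0 \<and> i = Suc j mod k)"
    using assms(3) x y by (auto simp: E_simp)
  have ez: "j' < k" "q' < 4" "(i=j' \<and> p\<noteq>q' \<and> {p,q'}\<noteq>{0,1}) \<or> (p=0 \<and> q'=1 \<and> j' = Suc i mod k) \<or> (p=1 \<and> q'=0 \<and> i = Suc j' mod k)"
    using assms(4) x z by (auto simp: E_simp)
  have yn: "\<not> (j = i \<and> (q = a \<or> q = 2 \<or> q = 3))" using assms(5) y by auto
  have zn: "\<not> (j' = i \<and> (q' = a \<or> q' = 2 \<or> q' = 3))" using assms(6) z by auto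
  have Y: "(p \<noteq> a \<and> j = i \<and> q = 1 - a) \<or> (p = a \<and> a = 0 \<and> q = 1 \<and> j = Suc i mod k) \<or>
         (p = a \<and> a = 1 \<and> q = 0 \<and> i = Suc j mod k)"
    by (rule clos_B_aux[OF x(2) assms(2) ey(3) ey(4) yn])
  have Z: "(p \<noteq> a \<and> j' = i \<and> q' = 1 - a) \<or> (p = a \<and> a = 0 \<and> q' = 1 \<and> j' = Suc i mod k) \<or>
         (p = a \<and> a = 1 \<and> q' = 0 \<and> i = Suc j' mod k)"
    by (rule clos_B_aux[OF x(2) assms(2) ez(2) ez(3) zn])
  have "j = j' \<and> q = q'"
  proof (cases "p = a")
    case False then show ?thesis using Y Z by auto
  next
    case True
    show ?thesis
    proof (cases "a = 0")
      case True then show ?thesis using Y Z \<open>p = a\<close> by auto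
    next
      case False
      then have "q = 0" "q' = 0" "Suc j mod k = Suc j' mod k" using Y Z \<open>p = a\<close> by auto
      then show ?thesis using suc_mod_inj[OF ey(1) ez(1)] by auto
    qed
  qed
  then show ?thesis using y z by simp
qed

lemma mkC:
  "C \<inter> S = {} \<Longrightarrow> C \<subseteq> V \<Longrightarrow> (\<forall>x y z. x\<in>C \<longrightarrow> y\<in>V \<longrightarrow> z\<in>V \<longrightarrow> E x y \<longrightarrow> E x z
         \<longrightarrow> y\<notin>C \<longrightarrow> z\<notin>C \<longrightarrow> y=z) \<Longrightarrow> C \<noteq> {} \<Longrightarrow>
   \<exists>C. C \<subseteq> V \<and> C \<noteq> {} \<and> C \<inter> S = {} \<and>
     (\<forall>x y z. x\<in>C \<longrightarrow> y\<in>V \<longrightarrow> z\<in>V \<longrightarrow> E x y \<longrightarrow> E x z \<longrightarrow> y\<notin>C \<longrightarrow> z\<notin>C \<longrightarrow> y=z)"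
  by blast

lemma lower:
  assumes k2: "k \<ge> 2" and perc: "percolating (necklace_V k) (necklace_E k) 2 S"
  shows "k + 1 \<le> card S"
proof (rule ccontr)
  assume "\<not> ?thesis"
  then have cs: "card S \<le> k" by simp
  have SV: "S \<subseteq> necklace_V k" and "\<exists>n. (perc_step (necklace_V k) (necklace_E k) 2 ^^ n) S = necklace_V k"
    using perc unfolding percolating_def by auto
  then obtain n where n: "(perc_step (necklace_V k) (necklace_E k) 2 ^^ n) S = necklace_V k" by blast
  have finS: "finite S" using SV finite_V finite_subset by blast
  have key: "\<exists>C. C \<subseteq> necklace_V k \<and> C \<noteq> {} \<and> C \<inter> S = {} \<and>
     (\<forall>x y z. x\<in>C \<longrightarrow> y\<in>necklace_V k \<longrightarrow> z\<in>necklace_V k \<longrightarrow> necklace_E k x y \<longrightarrow> necklace_E k x z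
         \<longrightarrow> y\<notin>C \<longrightarrow> z\<notin>C \<longrightarrow> y=z)"
  proof (cases "\<exists>i<k. i \<notin> fst ` S")
    case True
    then obtain i where i: "i < k" "i \<notin> fst ` S" by blast
    let ?C = "{i} \<times> {..<4::nat}"
    have "?C \<inter> S = {}"
    proof (rule ccontr)
      assume "?C \<inter> S \<noteq> {}"
      then obtain x where "x \<in> ?C" "x \<in> S" by blast
      then have "fst x = i" "fst x \<in> fst ` S" by auto
      then show False using i(2) by simp
    qed
    moreover have "?C \<subseteq> necklace_V k" using i by (auto simp: necklace_V_def)
    moreover have "\<forall>x y z. x\<in>?C \<longrightarrow> y\<in>necklace_V k \<longrightarrow> z\<in>necklace_V k \<longrightarrow> necklace_E k x y \<longrightarrow> necklace_E k x z
         \<longrightarrow> y\<notin>?C \<longrightarrow> z\<notin>?C \<longrightarrow> y=z"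
      by (intro allI impI, erule clos_A; assumption)
    ultimately show ?thesis by (rule mkC) (auto simp: lessThan_empty_iff)
  next
    case False
    then have "{..<k} \<subseteq> fst ` S" by auto
    moreover have "fst ` S \<subseteq> {..<k}" using SV by (auto simp: necklace_V_def)
    ultimately have fS: "fst ` S = {..<k}" by blast
    then have "card (fst ` S) = k" by simp
    moreover have "card (fst ` S) \<le> card S" using finS card_image_le by blast
    ultimately have "card (fst ` S) = card S" using cs by simp
    then have inj: "inj_on fst S" using finS eq_card_imp_inj_on by blast
    show ?thesis
    proof (cases "\<exists>i. (i,0) \<in> S")
      case True
      then obtain i where i: "(i,0) \<in> S" by blast
      then have ik: "i < k" using SV by (auto simp: necklace_V_def)
      let ?C = "{(i,1),(i,2),(i,3::nat)}"
      have "?C \<inter> S = {}" 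
      proof -
        have "(i,q) \<notin> S" if "q \<noteq> 0" for q
        proof
          assume "(i,q) \<in> S"
          then have "(i,q) = (i,0)" using inj i inj_onD[of fst S "(i,q)" "(i,0)"] by simp
          then show False using that by simp
        qed
        then show ?thesis by auto
      qed
      moreover have "?C \<subseteq> necklace_V k" using ik by (auto simp: necklace_V_def)
      moreover have "\<forall>x y z. x\<in>?C \<longrightarrow> y\<in>necklace_V k \<longrightarrow> z\<in>necklace_V k \<longrightarrow> necklace_E k x y \<longrightarrow> necklace_E k x z
           \<longrightarrow> y\<notin>?C \<longrightarrow> z\<notin>?C \<longrightarrow> y=z"
        by (intro allI impI, erule clos_B[of _ i 1 k]; (assumption | simp))
      ultimately show ?thesis by (rule mkC) auto
    next
      case F0: False
      show ?thesis
      proof (cases "\<exists>i. (i,1) \<in> S")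
        case True
        then obtain i where i: "(i,1) \<in> S" by blast
        then have ik: "i < k" using SV by (auto simp: necklace_V_def)
        let ?C = "{(i,0),(i,2),(i,3::nat)}"
        have "?C \<inter> S = {}" 
      proof -
        have "(i,q) \<notin> S" if "q \<noteq> 1" for q
        proof
          assume "(i,q) \<in> S"
          then have "(i,q) = (i,1)" using inj i inj_onD[of fst S "(i,q)" "(i,1)"] by simp
          then show False using that by simp
        qed
        then show ?thesis by auto
      qed
        moreover have "?C \<subseteq> necklace_V k" using ik by (auto simp: necklace_V_def)
        moreover have "\<forall>x y z. x\<in>?C \<longrightarrow> y\<in>necklace_V k \<longrightarrow> z\<in>necklace_V k \<longrightarrow> necklace_E k x y \<longrightarrow> necklace_E k x z
             \<longrightarrow> y\<notin>?C \<longrightarrow> z\<notin>?C \<longrightarrow> y=z"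
          by (intro allI impI, erule clos_B[of _ i 0 k]; (assumption | simp))
        ultimately show ?thesis by (rule mkC) auto
      next
        case F1: False
        let ?C = "necklace_V k - S"
        have z0: "(0,0) \<in> ?C" using F0 k2 by (auto simp: necklace_V_def)
        have "?C \<inter> S = {}" by blast
        moreover have "?C \<subseteq> necklace_V k" by blast
        moreover have "\<forall>x y z. x\<in>?C \<longrightarrow> y\<in>necklace_V k \<longrightarrow> z\<in>necklace_V k \<longrightarrow> necklace_E k x y \<longrightarrow> necklace_E k x z
             \<longrightarrow> y\<notin>?C \<longrightarrow> z\<notin>?C \<longrightarrow> y=z"
        proof (intro allI impI)
          fix x y z
          assume h: "x\<in>?C" "y\<in>necklace_V k" "z\<in>necklace_V k" "necklace_E k x y" "necklace_E k x z" "y\<notin>?C" "z\<notin>?C"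
          obtain i p where x: "x = (i,p)" by (cases x)
          obtain j q where y: "y = (j,q)" by (cases y)
          obtain j' q' where z: "z = (j',q')" by (cases z)
          have yS: "y \<in> S" and zS: "z \<in> S" using h by auto
          have "q \<noteq> 0"
          proof
            assume "q = 0"
            then have "(j,0) \<in> S" using yS y by simp
            then show False using F0 by auto
          qed
          moreover have "q' \<noteq> 0"
          proof
            assume "q' = 0"
            then have "(j',0) \<in> S" using zS z by simp
            then show False using F0 by auto
          qed
          moreover have "q \<noteq> 1"
          proof
            assume "q = 1"
            then have "(j,1) \<in> S" using yS y by simp
            then show False using F1 by auto
          qed
          moreover have "q' \<noteq> 1"
          proof
            assume "q' = 1"
            then have "(j',1) \<in> S" using zS z by simp
            then show False using F1 by auto
          qed
          moreover have "necklace_E k (i,p) (j,q)" "necklace_E k (i,p) (j',q')" using h(4,5) x y z by auto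
          ultimately have "j = i" "j' = i" unfolding E_simp by auto
          then have "fst y = fst z" using y z by simp
          then show "y = z" by (rule inj_onD[OF inj _ yS zS])
        qed
        ultimately show ?thesis by (rule mkC) (use z0 in blast)
      qed
    qed
  qed
  then obtain C where C: "C \<subseteq> necklace_V k" "C \<noteq> {}" "C \<inter> S = {}"
    "\<And>x y z. x\<in>C \<Longrightarrow> y\<in>necklace_V k \<Longrightarrow> z\<in>necklace_V k \<Longrightarrow> necklace_E k x y \<Longrightarrow> necklace_E k x z
         \<Longrightarrow> y\<notin>C \<Longrightarrow> z\<notin>C \<Longrightarrow> y=z" by blast
  have "(perc_step (necklace_V k) (necklace_E k) 2 ^^ n) S \<inter> C = {}"
    by (rule closed_never[OF finite_V C(3)]) (rule C(4))
  then show False using n C(1,2) by blast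
qed


lemma upper:
  assumes k2: "k \<ge> 2"
  shows "percolating (necklace_V k) (necklace_E k) 2 ((\<lambda>i. (i,2::nat)) ` {..<k} \<union> {(0,3)})"
proof -
  define S0 where "S0 = (\<lambda>i. (i,2::nat)) ` {..<k} \<union> {(0,3)}"
  define f where "f = perc_step (necklace_V k) (necklace_E k) 2"
  have S0V: "S0 \<subseteq> necklace_V k" using k2 by (auto simp: S0_def necklace_V_def)
  have S0f: "S0 \<subseteq> (f ^^ n) S0" for n
    using iter_mono[of 0 n "necklace_V k" "necklace_E k" 2 S0] unfolding f_def by simp
  have fin: "finite (necklace_V k)" by (rule finite_V)
  have inV: "(i,p) \<in> necklace_V k" if "i < k" "p < 4" for i p using that by (simp add: necklace_V_def)
  have claim: "\<forall>i\<le>j. \<forall>p<4. (i,p) \<in> (f ^^ (1 + 3*j)) S0" if "j < k" for j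
    using that
  proof (induction j)
    case 0
    have a: "(0,2) \<in> S0" "(0,3) \<in> S0" using k2 by (auto simp: S0_def)
    have "(0,0) \<in> f S0" unfolding f_def
      by (rule infect2[OF fin, of _ "(0,2)" "(0,3)"]) (use a k2 inV S0V in \<open>auto simp: E_simp\<close>)
    moreover have "(0,1) \<in> f S0" unfolding f_def
      by (rule infect2[OF fin, of _ "(0,2)" "(0,3)"]) (use a k2 inV S0V in \<open>auto simp: E_simp\<close>)
    moreover have "S0 \<subseteq> f S0" unfolding f_def by (rule step_mono)
    ultimately have "(0,p) \<in> f S0" if "p < 4" for p
      using that a by (auto simp: less_Suc_eq numeral_eq_Suc)
    then show ?case by simp
  next
    case (Suc j)
    define A where "A = (f ^^ (1 + 3*j)) S0"
    have IH: "\<forall>i\<le>j. \<forall>p<4. (i,p) \<in> A" using Suc A_def by simp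
    have jk: "Suc j < k" using Suc by simp
    have m1: "X \<subseteq> f X" for X unfolding f_def by (rule step_mono)
    have c: "(Suc j, 2) \<in> A" using S0f jk unfolding A_def S0_def by blast
    have b: "(Suc j, 1) \<in> f A" unfolding f_def
      by (rule infect2[OF fin, of _ "(j,0)" "(Suc j,2)"]) (use IH c jk inV in \<open>auto simp: E_simp\<close>)
    have c1: "(Suc j, 2) \<in> f A" using c m1 by blast
    have c2: "(Suc j, 2) \<in> f (f A)" using c1 m1 by blast
    have "(Suc j, 3) \<in> perc_step (necklace_V k) (necklace_E k) 2 (f A)"
      by (rule infect2[OF fin, of _ "(Suc j,1)" "(Suc j,2)"]) (use b c1 jk inV in \<open>auto simp: E_simp\<close>)
    then have d: "(Suc j, 3) \<in> f (f A)" unfolding f_def .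
    have "(Suc j, 0) \<in> perc_step (necklace_V k) (necklace_E k) 2 (f (f A))"
      by (rule infect2[OF fin, of _ "(Suc j,2)" "(Suc j,3)"]) (use d c2 jk inV in \<open>auto simp: E_simp\<close>)
    then have a: "(Suc j, 0) \<in> f (f (f A))" unfolding f_def .
    have eq: "(f ^^ (1 + 3 * Suc j)) S0 = f (f (f A))"
    proof -
      have nn: "1 + 3 * Suc j = Suc (Suc (Suc (1 + 3*j)))" by simp
      show ?thesis unfolding A_def nn funpow.simps(2) o_apply ..
    qed
    have sub: "A \<subseteq> f (f (f A))" using m1 by blast
    show ?case unfolding eq
    proof (intro allI impI)
      fix i p :: nat assume "i \<le> Suc j" "p < 4"
      show "(i,p) \<in> f (f (f A))"
      proof (cases "i \<le> j")
        case True then show ?thesis using IH sub \<open>p<4\<close> by blast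
      next
        case False
        then have "i = Suc j" using \<open>i \<le> Suc j\<close> by simp
        moreover have "p = 0 \<or> p = 1 \<or> p = 2 \<or> p = 3" using \<open>p<4\<close> by auto
        ultimately show ?thesis using a b c d m1 sub by blast
      qed
    qed
  qed
  have all: "necklace_V k \<subseteq> (f ^^ (1 + 3*(k-1))) S0"
  proof
    fix x assume "x \<in> necklace_V k"
    then obtain i p where "x = (i,p)" "i < k" "p < 4" by (auto simp: necklace_V_def)
    then show "x \<in> (f ^^ (1 + 3*(k-1))) S0" using claim[of "k-1"] k2 by auto
  qed
  have inv: "(f ^^ n) S0 \<subseteq> necklace_V k" for n
    by (induction n) (use S0V in \<open>auto simp: f_def perc_step_def\<close>)
  have eqV: "(f ^^ (1 + 3*(k-1))) S0 = necklace_V k" using all inv by blast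
  show ?thesis unfolding percolating_def S0_def[symmetric] using S0V eqV unfolding f_def by blast
qed

lemma card_S0: "card ((\<lambda>i. (i,2::nat)) ` {..<k} \<union> {(0,3)}) = k + 1"
proof -
  have "card ((\<lambda>i. (i,2::nat)) ` {..<k}) = k" by (simp add: card_image inj_on_def)
  moreover have "(0,3) \<notin> (\<lambda>i. (i,2::nat)) ` {..<k}" by auto
  ultimately show ?thesis by simp
qed

theorem proposition4p1:
  fixes k :: nat
  assumes "k \<ge> 2"
  shows "m_perc (necklace_V k) (necklace_E k) 2 = k + 1"
  unfolding m_perc_def
proof (rule Least_equality)
  show "\<exists>S. percolating (necklace_V k) (necklace_E k) 2 S \<and> card S = k + 1"
    using upper[OF assms] card_S0 by blast
next
  fix y assume "\<exists>S. percolating (necklace_V k) (necklace_E k) 2 S \<and> card S = y"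
  then show "k + 1 \<le> y" using lower[OF assms] by blast
qed

end
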